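(* Let $n,t\ge1$. For each $1\le k\le n$ let $\bm{X}^k=(X_1^k,\dots,X_t^k)$ be a random vector, fix an index $1\le i\le n$, and let $\widetilde{\bm{X}}^i=(\widetilde{X}_1^i,\dots,\widetilde{X}_t^i)$ be another random vector. Assume spatial independence: $\bm{X}^1,\dots,\bm{X}^n$ are mutually independent, and $\bm{X}^1,\dots,\bm{X}^{i-1},\widetilde{\bm{X}}^i,\bm{X}^{i+1},\dots,\bm{X}^n$ are mutually independent. Let $f_j\in\mathfrak{F}_{USIA}$ for $1\le j\le t$, and set $X_j=f_j(X_j^1,\dots,X_j^n)$ and $\widetilde{X}_j=f_j(X_j^1,\dots,X_j^{i-1},\widetilde{X}_j^i,X_j^{i+1},\dots,X_j^n)$. If $\bm{X}^i\le_{dcx}\widetilde{\bm{X}}^i$ and $\bm{X}^i$ and $\widetilde{\bm{X}}^i$ have a common conditionally increasing copula, then $$(X_1,\dots,X_t)\le_{dcx}(\widetilde{X}_1,\dots,\widetilde{X}_t)\quad\text{and}\quad \sum_{j=1}^t\alpha_jX_j\le_{cx}\sum_{j=1}^t\alpha_j\widetilde{X}_j$$ for all $\alpha_1,\dots,\alpha_t\ge0$.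
   Context: $\mathfrak{F}_{USIA}$ is the set of functions $f:\mathbb{R}^n\to\mathbb{R}$ such that for every $\bm{x}\in\mathbb{R}^n$ and every coordinate $i$, the map $x_i\mapsto f(\bm{x})$ (other coordinates fixed) is affine and strictly increasing. A function $\phi:\mathbb{R}^t\to\mathbb{R}$ is directionally convex if it is supermodular and convex in each coordinate. $\bm{X}\le_{dcx}\bm{Y}$ means $\mathbb{E}\phi(\bm{X})\le\mathbb{E}\phi(\bm{Y})$ for all directionally convex $\phi$ for which the expectations exist; $X\le_{cx}Y$ (real) means $\mathbb{E}\phi(X)\le\mathbb{E}\phi(Y)$ for all convex $\phi$. A copula $C$ is conditionally increasing if a random vector $\bm{U}$ with distribution $C$ satisfies: for every $i$ and every index set $J\not\ni i$, $\mathbb{E}[\psi(U_i)\mid U_j,j\in J]$ is increasing in $(U_j)_{j\in J}$ for every increasing $\psi$. *)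

theory Defs
  imports "HOL-Probability.Probability"
begin

text \<open>Vectors in R^n / R^t are represented by real^'n / real^'t (dimension = CARD of the index type).\<close>

definition upd_vec :: "real^'n \<Rightarrow> 'n \<Rightarrow> real \<Rightarrow> real^'n" where
  "upd_vec x i s = (\<chi> k. if k = i then s else x $ k)"

definition F_USIA :: "(real^'n \<Rightarrow> real) set" where
  "F_USIA = {f. \<forall>x i. (\<exists>a b. \<forall>s. f (upd_vec x i s) = a * s + b)
                     \<and> strict_mono (\<lambda>s. f (upd_vec x i s))}"

definition supermodular :: "(real^'t \<Rightarrow> real) \<Rightarrow> bool" where
  "supermodular \<phi> \<longleftrightarrow> (\<forall>x y. \<phi> x + \<phi> y \<le>
      \<phi> (\<chi> j. max (x $ j) (y $ j)) + \<phi> (\<chi> j. min (x $ j) (y $ j)))"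

definition dir_convex :: "(real^'t \<Rightarrow> real) \<Rightarrow> bool" where
  "dir_convex \<phi> \<longleftrightarrow> supermodular \<phi> \<and> (\<forall>x j. convex_on UNIV (\<lambda>s. \<phi> (upd_vec x j s)))"

definition dcx_le :: "'a measure \<Rightarrow> ('a \<Rightarrow> real^'t) \<Rightarrow> ('a \<Rightarrow> real^'t) \<Rightarrow> bool" where
  "dcx_le M X Y \<longleftrightarrow> (\<forall>\<phi>. dir_convex \<phi> \<longrightarrow> integrable M (\<lambda>\<omega>. \<phi> (X \<omega>)) \<longrightarrow>
      integrable M (\<lambda>\<omega>. \<phi> (Y \<omega>)) \<longrightarrow>
      (\<integral>\<omega>. \<phi> (X \<omega>) \<partial>M) \<le> (\<integral>\<omega>. \<phi> (Y \<omega>) \<partial>M))"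

definition cx_le :: "'a measure \<Rightarrow> ('a \<Rightarrow> real) \<Rightarrow> ('a \<Rightarrow> real) \<Rightarrow> bool" where
  "cx_le M X Y \<longleftrightarrow> (\<forall>\<phi>. convex_on UNIV \<phi> \<longrightarrow> integrable M (\<lambda>\<omega>. \<phi> (X \<omega>)) \<longrightarrow>
      integrable M (\<lambda>\<omega>. \<phi> (Y \<omega>)) \<longrightarrow>
      (\<integral>\<omega>. \<phi> (X \<omega>) \<partial>M) \<le> (\<integral>\<omega>. \<phi> (Y \<omega>) \<partial>M))"

text \<open>A copula, represented by its probability distribution on R^t: uniform [0,1] marginals.\<close>
definition is_copula :: "(real^'t) measure \<Rightarrow> bool" where
  "is_copula C \<longleftrightarrow> prob_space C \<and> sets C = sets borel \<and>
     (\<forall>j. \<forall>x\<in>{0..1}. measure C {u. u $ j \<le> x} = x)"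

definition copula_of :: "'a measure \<Rightarrow> ('a \<Rightarrow> real^'t) \<Rightarrow> (real^'t) measure \<Rightarrow> bool" where
  "copula_of M X C \<longleftrightarrow> is_copula C \<and> (\<forall>x.
     measure M {\<omega>\<in>space M. \<forall>j. X \<omega> $ j \<le> x $ j} =
     measure C {u. \<forall>j. u $ j \<le> measure M {\<omega>\<in>space M. X \<omega> $ j \<le> x $ j}})"

definition coord_algebra :: "(real^'t) measure \<Rightarrow> 't set \<Rightarrow> (real^'t) measure" where
  "coord_algebra C J = vimage_algebra (space C) (\<lambda>u. \<chi> j. if j \<in> J then u $ j else 0) borel"

definition cond_increasing :: "(real^'t) measure \<Rightarrow> bool" where
  "cond_increasing C \<longleftrightarrow> (\<forall>i J (\<psi>::real \<Rightarrow> real). i \<notin> J \<longrightarrow> mono \<psi> \<longrightarrow>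
     integrable C (\<lambda>u. \<psi> (u $ i)) \<longrightarrow>
     (\<exists>g. (\<forall>u v. (\<forall>j\<in>J. u $ j \<le> v $ j) \<longrightarrow> g u \<le> g v) \<and>
          (AE u in C. real_cond_exp C (coord_algebra C J) (\<lambda>u. \<psi> (u $ i)) u = g u)))"

end

theory Submission imports Defs begin

lemma vec_measurable:
  fixes g :: "'a \<Rightarrow> 'k::finite \<Rightarrow> real"
  assumes "\<And>k. (\<lambda>x. g x k) \<in> borel_measurable M"
  shows "(\<lambda>x. \<chi> k. g x k) \<in> borel_measurable M"
proof (rule borel_measurable_euclidean_space[THEN iffD2], intro ballI)
  fix b :: "real^'k" assume "b \<in> Basis"
  then obtain k where b: "b = axis k 1" unfolding Basis_vec_def by auto
  have "(\<lambda>x. (\<chi> k. g x k) \<bullet> b) = (\<lambda>x. g x k)" unfolding b by (simp add: inner_axis)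
  then show "(\<lambda>x. (\<chi> k. g x k) \<bullet> b) \<in> borel_measurable M" using assms by simp
qed

lemma vec_nth_measurable[measurable]:
  "(\<lambda>x::real^'k::finite. x $ k) \<in> borel_measurable borel"
  by (intro borel_measurable_continuous_onI continuous_intros)

lemma floor_approx:
  fixes s :: real
  shows "(\<lambda>m::nat. real_of_int \<lfloor>real (Suc m) * s\<rfloor> / real (Suc m)) \<longlonglongrightarrow> s"
proof (rule real_tendsto_sandwich[where f="\<lambda>m. s - 1 / real (Suc m)" and h="\<lambda>m. s"])
  show "\<forall>\<^sub>F m in sequentially. s - 1 / real (Suc m) \<le> real_of_int \<lfloor>real (Suc m) * s\<rfloor> / real (Suc m)"
  proof (intro always_eventually allI)
    fix m
    have "real (Suc m) * s - 1 \<le> real_of_int \<lfloor>real (Suc m) * s\<rfloor>" by linarith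
    then have "(real (Suc m) * s - 1) / real (Suc m) \<le> real_of_int \<lfloor>real (Suc m) * s\<rfloor> / real (Suc m)"
      by (rule divide_right_mono) simp
    moreover have "s - 1 / real (Suc m) = (real (Suc m) * s - 1) / real (Suc m)"
      by (simp add: field_simps)
    ultimately show "s - 1 / real (Suc m) \<le> real_of_int \<lfloor>real (Suc m) * s\<rfloor> / real (Suc m)"
      by simp
  qed
  show "\<forall>\<^sub>F m in sequentially. real_of_int \<lfloor>real (Suc m) * s\<rfloor> / real (Suc m) \<le> s"
  proof (intro always_eventually allI)
    fix m
    have "real_of_int \<lfloor>real (Suc m) * s\<rfloor> \<le> real (Suc m) * s" by linarith
    then show "real_of_int \<lfloor>real (Suc m) * s\<rfloor> / real (Suc m) \<le> s"
      by (simp add: field_simps)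
  qed
  show "(\<lambda>m. s - 1 / real (Suc m)) \<longlonglongrightarrow> s"
    using tendsto_diff[OF tendsto_const lim_inverse_n'[THEN LIMSEQ_Suc]]
    by (simp add: inverse_eq_divide)
qed (rule tendsto_const)

lemma sep_cont_measurable_aux:
  fixes h :: "real^'n::finite \<Rightarrow> real"
  assumes cont: "\<And>x k. continuous_on UNIV (\<lambda>s. h (upd_vec x k s))"
    and "finite S"
  shows "\<forall>x0. (\<lambda>x. h (\<chi> k. if k \<in> S then x$k else x0$k)) \<in> borel_measurable borel"
  using \<open>finite S\<close>
proof (induction S)
  case empty
  then show ?case by simp
next
  case (insert a S)
  show ?case
  proof
    fix x0
    define F where "F m x = h (\<chi> k. if k = a then real_of_int \<lfloor>real (Suc m) * x$a\<rfloor> / real (Suc m)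
        else if k \<in> S then x$k else x0$k)" for m x
    have F: "F m \<in> borel_measurable borel" for m
    proof -
      have "(\<lambda>x. (\<lambda>z x. h (\<chi> k. if k \<in> S then x$k else (upd_vec x0 a (real_of_int z / real (Suc m)))$k))
           (\<lfloor>real (Suc m) * x$a\<rfloor>) x) \<in> borel_measurable borel"
      proof (rule measurable_compose_countable'[where I=UNIV and g="\<lambda>x. \<lfloor>real (Suc m) * x$a\<rfloor>"
          and f="\<lambda>z x. h (\<chi> k. if k \<in> S then x$k else (upd_vec x0 a (real_of_int z / real (Suc m)))$k)"])
        have "(\<lambda>x::real^'n. real (Suc m) * x$a) \<in> borel_measurable borel"
          by (intro borel_measurable_continuous_onI continuous_intros)
        then show "(\<lambda>x. \<lfloor>real (Suc m) * x$a\<rfloor>) \<in> measurable borel (count_space UNIV)"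
          by (rule measurable_compose[OF _ measurable_real_floor])
      next
        fix z :: int
        show "(\<lambda>x. h (\<chi> k. if k \<in> S then x$k else (upd_vec x0 a (real_of_int z / real (Suc m)))$k)) \<in> borel_measurable borel"
          using spec[OF insert.IH, of "upd_vec x0 a (real_of_int z / real (Suc m))"] .
      qed simp
      moreover have "F m = (\<lambda>x. (\<lambda>z x. h (\<chi> k. if k \<in> S then x$k else (upd_vec x0 a (real_of_int z / real (Suc m)))$k))
           (\<lfloor>real (Suc m) * x$a\<rfloor>) x)"
        unfolding F_def
      proof (rule ext, rule arg_cong[where f=h])
        fix x :: "real^'n"
        show "(\<chi> k. if k = a then real_of_int \<lfloor>real (Suc m) * x$a\<rfloor> / real (Suc m)
          else if k \<in> S then x$k else x0$k) = (\<chi> k. if k \<in> S then x$k else (upd_vec x0 a (real_of_int \<lfloor>real (Suc m) * x$a\<rfloor> / real (Suc m)))$k)"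
          using insert.hyps by (simp add: vec_eq_iff upd_vec_def)
      qed
      ultimately show ?thesis by simp
    qed
    show "(\<lambda>x. h (\<chi> k. if k \<in> insert a S then x$k else x0$k)) \<in> borel_measurable borel"
    proof (rule borel_measurable_LIMSEQ_real[OF _ F])
      fix x :: "real^'n"
      define w where "w = (\<chi> k. if k \<in> insert a S then x$k else x0$k)"
      have eq1: "F m x = h (upd_vec w a (real_of_int \<lfloor>real (Suc m) * x$a\<rfloor> / real (Suc m)))" for m
        unfolding F_def w_def upd_vec_def by (rule arg_cong[where f=h]) (simp add: vec_eq_iff)
      have eq2: "h (\<chi> k. if k \<in> insert a S then x$k else x0$k) = h (upd_vec w a (x$a))"
        unfolding w_def upd_vec_def by (rule arg_cong[where f=h]) (simp add: vec_eq_iff)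
      have isC: "isCont (\<lambda>s. h (upd_vec w a s)) (x$a)"
        using cont[of w a] by (simp add: continuous_on_eq_continuous_at)
      have eqF: "(\<lambda>m. F m x) = (\<lambda>m. h (upd_vec w a (real_of_int \<lfloor>real (Suc m) * x$a\<rfloor> / real (Suc m))))"
        by (rule ext) (rule eq1)
      show "(\<lambda>m. F m x) \<longlonglongrightarrow> h (\<chi> k. if k \<in> insert a S then x$k else x0$k)"
        unfolding eqF eq2 by (rule isCont_tendsto_compose[OF isC floor_approx])
    qed
  qed
qed

lemma sep_cont_measurable:
  fixes h :: "real^'n::finite \<Rightarrow> real"
  assumes cont: "\<And>x k. continuous_on UNIV (\<lambda>s. h (upd_vec x k s))"
  shows "h \<in> borel_measurable borel"
  using sep_cont_measurable_aux[OF cont, of UNIV] by simp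


lemma convex_affine_comp:
  fixes g :: "real \<Rightarrow> real"
  assumes "convex_on UNIV g"
  shows "convex_on UNIV (\<lambda>s. g (c * s + d))"
proof (rule convex_onI)
  fix t x y :: real assume t: "0 < t" "t < 1"
  have "c * ((1 - t) *\<^sub>R x + t *\<^sub>R y) + d = (1 - t) *\<^sub>R (c * x + d) + t *\<^sub>R (c * y + d)"
    by (simp add: algebra_simps)
  then show "g (c * ((1 - t) *\<^sub>R x + t *\<^sub>R y) + d) \<le> (1 - t) * g (c * x + d) + t * g (c * y + d)"
    using convex_onD[OF assms, of t "c * x + d" "c * y + d"] t by simp
qed simp

lemma convex_four:
  fixes g :: "real \<Rightarrow> real"
  assumes g: "convex_on UNIV g" and "l \<le> p" "p \<le> u" "l \<le> q" "q \<le> u" "p + q = u + l"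
  shows "g p + g q \<le> g u + g l"
proof (cases "u = l")
  case True
  then have "p = u" "q = u" using assms by auto
  then show ?thesis using True by simp
next
  case False
  then have ul: "u - l > 0" using assms by simp
  define t where "t = (p - l) / (u - l)"
  have t0: "0 \<le> t" and t1: "t \<le> 1" using assms ul by (auto simp: t_def field_simps)
  have tt: "t * (u - l) = p - l" using ul by (simp add: t_def)
  have tt': "t * u - t * l = p - l" using tt by (simp only: right_diff_distrib)
  have e1: "(1 - t) *\<^sub>R l + t *\<^sub>R u = l + (t * u - t * l)" by (simp add: algebra_simps)
  have e2: "(1 - t) *\<^sub>R u + t *\<^sub>R l = u - (t * u - t * l)" by (simp add: algebra_simps)
  have p: "p = (1 - t) *\<^sub>R l + t *\<^sub>R u" unfolding e1 tt' by simp
  have q: "q = (1 - t) *\<^sub>R u + t *\<^sub>R l" unfolding e2 tt' using assms(6) by simp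
  have "g p \<le> (1 - t) * g l + t * g u" using convex_onD[OF g t0 t1, of l u] p by simp
  moreover have "g q \<le> (1 - t) * g u + t * g l" using convex_onD[OF g t0 t1, of u l] q by simp
  ultimately show ?thesis by (simp add: algebra_simps)
qed

lemma dir_convex_affine:
  fixes \<phi> :: "real^'t::finite \<Rightarrow> real"
  assumes dc: "dir_convex \<phi>" and a: "\<And>j. a j > 0"
  shows "dir_convex (\<lambda>v. \<phi> (\<chi> j. a j * v$j + b j))"
  unfolding dir_convex_def
proof safe
  show "supermodular (\<lambda>v. \<phi> (\<chi> j. a j * v$j + b j))"
    unfolding supermodular_def
  proof (intro allI)
    fix x y :: "real^'t"
    have "\<phi> (\<chi> j. a j * x$j + b j) + \<phi> (\<chi> j. a j * y$j + b j) \<le>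
      \<phi> (\<chi> j. max ((\<chi> j. a j * x$j + b j) $ j) ((\<chi> j. a j * y$j + b j) $ j)) +
      \<phi> (\<chi> j. min ((\<chi> j. a j * x$j + b j) $ j) ((\<chi> j. a j * y$j + b j) $ j))"
      using dc unfolding dir_convex_def supermodular_def by blast
    moreover have "(\<chi> j. max ((\<chi> j. a j * x$j + b j) $ j) ((\<chi> j. a j * y$j + b j) $ j)) =
        (\<chi> j. a j * (\<chi> j. max (x $ j) (y $ j))$j + b j)"
      using a by (simp add: vec_eq_iff max_def mult_le_cancel_left_pos)
    moreover have "(\<chi> j. min ((\<chi> j. a j * x$j + b j) $ j) ((\<chi> j. a j * y$j + b j) $ j)) =
        (\<chi> j. a j * (\<chi> j. min (x $ j) (y $ j))$j + b j)"
      using a by (simp add: vec_eq_iff min_def mult_le_cancel_left_pos)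
    ultimately show "\<phi> (\<chi> j. a j * x$j + b j) + \<phi> (\<chi> j. a j * y$j + b j) \<le>
      \<phi> (\<chi> j. a j * (\<chi> j. max (x $ j) (y $ j))$j + b j) + \<phi> (\<chi> j. a j * (\<chi> j. min (x $ j) (y $ j))$j + b j)"
      by simp
  qed
next
  fix x :: "real^'t" and k
  define w where "w = (\<chi> j. a j * x$j + b j)"
  have "(\<lambda>s. \<phi> (\<chi> j. a j * upd_vec x k s $ j + b j)) = (\<lambda>s. \<phi> (upd_vec w k (a k * s + b k)))"
    by (rule ext, rule arg_cong[where f=\<phi>]) (simp add: vec_eq_iff upd_vec_def w_def)
  moreover have "convex_on UNIV (\<lambda>s. \<phi> (upd_vec w k (a k * s + b k)))"
    using dc unfolding dir_convex_def by (intro convex_affine_comp) blast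
  ultimately show "convex_on UNIV (\<lambda>s. \<phi> (\<chi> j. a j * upd_vec x k s $ j + b j))" by simp
qed

lemma dir_convex_sum:
  fixes \<psi> :: "real \<Rightarrow> real" and \<alpha> :: "'t::finite \<Rightarrow> real"
  assumes g: "convex_on UNIV \<psi>" and a: "\<And>j. \<alpha> j \<ge> 0"
  shows "dir_convex (\<lambda>x::real^'t. \<psi> (\<Sum>j\<in>UNIV. \<alpha> j * x$j))"
  unfolding dir_convex_def
proof safe
  show "supermodular (\<lambda>x::real^'t. \<psi> (\<Sum>j\<in>UNIV. \<alpha> j * x$j))"
    unfolding supermodular_def
  proof (intro allI)
    fix x y :: "real^'t"
    show "\<psi> (\<Sum>j\<in>UNIV. \<alpha> j * x$j) + \<psi> (\<Sum>j\<in>UNIV. \<alpha> j * y$j) \<le>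
      \<psi> (\<Sum>j\<in>UNIV. \<alpha> j * (\<chi> j. max (x $ j) (y $ j))$j) + \<psi> (\<Sum>j\<in>UNIV. \<alpha> j * (\<chi> j. min (x $ j) (y $ j))$j)"
    proof (rule convex_four[OF g])
      show "(\<Sum>j\<in>UNIV. \<alpha> j * (\<chi> j. min (x $ j) (y $ j))$j) \<le> (\<Sum>j\<in>UNIV. \<alpha> j * x$j)"
        using a by (intro sum_mono) (simp add: mult_left_mono)
      show "(\<Sum>j\<in>UNIV. \<alpha> j * (\<chi> j. min (x $ j) (y $ j))$j) \<le> (\<Sum>j\<in>UNIV. \<alpha> j * y$j)"
        using a by (intro sum_mono) (simp add: mult_left_mono)
      show "(\<Sum>j\<in>UNIV. \<alpha> j * x$j) \<le> (\<Sum>j\<in>UNIV. \<alpha> j * (\<chi> j. max (x $ j) (y $ j))$j)"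
        using a by (intro sum_mono) (simp add: mult_left_mono)
      show "(\<Sum>j\<in>UNIV. \<alpha> j * y$j) \<le> (\<Sum>j\<in>UNIV. \<alpha> j * (\<chi> j. max (x $ j) (y $ j))$j)"
        using a by (intro sum_mono) (simp add: mult_left_mono)
      have "\<alpha> j * x$j + \<alpha> j * y$j = \<alpha> j * (\<chi> j. max (x $ j) (y $ j))$j + \<alpha> j * (\<chi> j. min (x $ j) (y $ j))$j" for j
        by (simp add: max_def min_def algebra_simps)
      then show "(\<Sum>j\<in>UNIV. \<alpha> j * x$j) + (\<Sum>j\<in>UNIV. \<alpha> j * y$j) =
        (\<Sum>j\<in>UNIV. \<alpha> j * (\<chi> j. max (x $ j) (y $ j))$j) + (\<Sum>j\<in>UNIV. \<alpha> j * (\<chi> j. min (x $ j) (y $ j))$j)"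
        by (simp add: sum.distrib[symmetric])
    qed
  qed
next
  fix x :: "real^'t" and k
  define c where "c = (\<Sum>j\<in>UNIV-{k}. \<alpha> j * x$j)"
  have "(\<Sum>j\<in>UNIV. \<alpha> j * upd_vec x k s $ j) = \<alpha> k * s + c" for s
  proof -
    have "(\<Sum>j\<in>UNIV. \<alpha> j * upd_vec x k s $ j) = \<alpha> k * upd_vec x k s $ k + (\<Sum>j\<in>UNIV-{k}. \<alpha> j * upd_vec x k s $ j)"
      by (simp add: sum.remove)
    also have "(\<Sum>j\<in>UNIV-{k}. \<alpha> j * upd_vec x k s $ j) = c"
      unfolding c_def by (intro sum.cong) (auto simp: upd_vec_def)
    finally show ?thesis by (simp add: upd_vec_def)
  qed
  then have "(\<lambda>s. \<psi> (\<Sum>j\<in>UNIV. \<alpha> j * upd_vec x k s $ j)) = (\<lambda>s. \<psi> (\<alpha> k * s + c))" by simp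
  then show "convex_on UNIV (\<lambda>s. \<psi> (\<Sum>j\<in>UNIV. \<alpha> j * upd_vec x k s $ j))"
    using convex_affine_comp[OF g] by simp
qed

lemma F_USIA_D:
  assumes "f \<in> F_USIA"
  shows "\<exists>a b. a > 0 \<and> (\<forall>s. f (upd_vec x k s) = a * s + b)"
proof -
  from assms obtain a b where ab: "\<forall>s. f (upd_vec x k s) = a * s + b"
    and sm: "strict_mono (\<lambda>s. f (upd_vec x k s))" unfolding F_USIA_def by blast
  have "f (upd_vec x k 0) < f (upd_vec x k 1)" using sm by (simp add: strict_mono_def)
  then have "a > 0" using ab by simp
  with ab show ?thesis by blast
qed

lemma F_USIA_measurable:
  assumes "f \<in> F_USIA"
  shows "f \<in> borel_measurable borel"
proof (rule sep_cont_measurable)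
  fix x k
  obtain a b where "a > 0" "\<forall>s. f (upd_vec x k s) = a * s + b" using F_USIA_D[OF assms] by blast
  then have "(\<lambda>s. f (upd_vec x k s)) = (\<lambda>s. a * s + b)" by auto
  then show "continuous_on UNIV (\<lambda>s. f (upd_vec x k s))"
    unfolding \<open>(\<lambda>s. f (upd_vec x k s)) = (\<lambda>s. a * s + b)\<close> by (intro continuous_intros)
qed

lemma dir_convex_measurable:
  assumes "dir_convex \<phi>"
  shows "\<phi> \<in> borel_measurable borel"
proof (rule sep_cont_measurable)
  fix x k
  show "continuous_on UNIV (\<lambda>s. \<phi> (upd_vec x k s))"
    using assms unfolding dir_convex_def by (intro convex_on_continuous) auto
qed


lemma transfer_fubini:
  fixes G :: "'b \<times> 'b \<Rightarrow> real" and S :: "'b measure" and T :: "'b measure"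
  assumes P: "prob_space M"
    and ind: "prob_space.indep_var M S Y T Z"
    and Gm: "G \<in> borel_measurable (S \<Otimes>\<^sub>M T)"
    and int: "integrable M (\<lambda>\<omega>. G (Y \<omega>, Z \<omega>))"
  shows "AE y in distr M S Y. integrable M (\<lambda>\<omega>. G (y, Z \<omega>))"
    and "integrable (distr M S Y) (\<lambda>y. \<integral>\<omega>. G (y, Z \<omega>) \<partial>M)"
    and "(\<integral>\<omega>. G (Y \<omega>, Z \<omega>) \<partial>M) = (\<integral>y. (\<integral>\<omega>. G (y, Z \<omega>) \<partial>M) \<partial>distr M S Y)"
proof -
  interpret prob_space M by fact
  have rv: "Y \<in> measurable M S" "Z \<in> measurable M T"
    using ind by (auto dest: indep_var_rv1 indep_var_rv2)
  have deq: "distr M S Y \<Otimes>\<^sub>M distr M T Z = distr M (S \<Otimes>\<^sub>M T) (\<lambda>x. (Y x, Z x))"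
    using ind indep_var_distribution_eq by blast
  interpret Q: prob_space "distr M S Y" using rv by (intro prob_space_distr) auto
  interpret R: prob_space "distr M T Z" using rv by (intro prob_space_distr) auto
  interpret QR: pair_sigma_finite "distr M S Y" "distr M T Z"
    unfolding pair_sigma_finite_def using Q.sigma_finite_measure_axioms R.sigma_finite_measure_axioms by simp
  have YZ: "(\<lambda>x. (Y x, Z x)) \<in> measurable M (S \<Otimes>\<^sub>M T)" using rv by measurable
  have Gm': "G \<in> borel_measurable (distr M S Y \<Otimes>\<^sub>M distr M T Z)"
    using Gm by (simp add: deq)
  have intP: "integrable (distr M S Y \<Otimes>\<^sub>M distr M T Z) G"
    unfolding deq using int by (subst integrable_distr_eq[OF YZ Gm]) auto
  have sec: "(\<lambda>v. G (y, v)) \<in> borel_measurable T" if "y \<in> space S" for y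
    using measurable_Pair2[OF Gm that] .
  have inner: "integrable (distr M T Z) (\<lambda>v. G (y, v)) \<longleftrightarrow> integrable M (\<lambda>\<omega>. G (y, Z \<omega>))"
    and inner2: "(\<integral>v. G (y, v) \<partial>distr M T Z) = (\<integral>\<omega>. G (y, Z \<omega>) \<partial>M)" if "y \<in> space S" for y
    using integrable_distr_eq[OF rv(2) sec[OF that]] integral_distr[OF rv(2) sec[OF that]] by auto
  show "AE y in distr M S Y. integrable M (\<lambda>\<omega>. G (y, Z \<omega>))"
    using QR.AE_integrable_fst'[OF intP] AE_space inner by (auto elim: AE_mp)
  have "integrable (distr M S Y) (\<lambda>y. \<integral>v. G (y, v) \<partial>distr M T Z)"
    using QR.integrable_fst'[OF intP] .
  then show "integrable (distr M S Y) (\<lambda>y. \<integral>\<omega>. G (y, Z \<omega>) \<partial>M)"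
    by (rule Bochner_Integration.integrable_cong[THEN iffD1, rotated 2]) (auto simp: inner2)
  have "(\<integral>\<omega>. G (Y \<omega>, Z \<omega>) \<partial>M) = integral\<^sup>L (distr M S Y \<Otimes>\<^sub>M distr M T Z) G"
    unfolding deq by (rule integral_distr[OF YZ Gm, symmetric])
  also have "\<dots> = (\<integral>y. (\<integral>v. G (y, v) \<partial>distr M T Z) \<partial>distr M S Y)"
    using QR.integral_fst'[OF intP] by simp
  also have "\<dots> = (\<integral>y. (\<integral>\<omega>. G (y, Z \<omega>) \<partial>M) \<partial>distr M S Y)"
    by (rule Bochner_Integration.integral_cong) (auto simp: inner2)
  finally show "(\<integral>\<omega>. G (Y \<omega>, Z \<omega>) \<partial>M) = (\<integral>y. (\<integral>\<omega>. G (y, Z \<omega>) \<partial>M) \<partial>distr M S Y)" .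
qed


theorem theorem15:
  fixes M :: "'a measure"
    and X :: "'n::finite \<Rightarrow> 'a \<Rightarrow> real^'t::finite"
    and Xt :: "'a \<Rightarrow> real^'t"
    and i :: 'n
    and f :: "'t \<Rightarrow> real^'n \<Rightarrow> real"
  assumes "prob_space M"
    and "\<And>k. X k \<in> borel_measurable M"
    and "Xt \<in> borel_measurable M"
    and "prob_space.indep_vars M (\<lambda>_. borel) X UNIV"
    and "prob_space.indep_vars M (\<lambda>_. borel) (\<lambda>k. if k = i then Xt else X k) UNIV"
    and "\<And>j. f j \<in> F_USIA"
    and "dcx_le M (X i) Xt"
    and "\<exists>C. cond_increasing C \<and> copula_of M (X i) C \<and> copula_of M Xt C"
  shows "dcx_le M (\<lambda>\<omega>. \<chi> j. f j (\<chi> k. X k \<omega> $ j))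
                  (\<lambda>\<omega>. \<chi> j. f j (\<chi> k. if k = i then Xt \<omega> $ j else X k \<omega> $ j))
       \<and> (\<forall>\<alpha>::'t \<Rightarrow> real. (\<forall>j. 0 \<le> \<alpha> j) \<longrightarrow>
            cx_le M (\<lambda>\<omega>. \<Sum>j\<in>UNIV. \<alpha> j * f j (\<chi> k. X k \<omega> $ j))
                    (\<lambda>\<omega>. \<Sum>j\<in>UNIV. \<alpha> j * f j (\<chi> k. if k = i then Xt \<omega> $ j else X k \<omega> $ j)))"
proof -
  interpret prob_space M by fact
  define S where "S = (Pi\<^sub>M (-{i}) (\<lambda>_. borel) :: ('n \<Rightarrow> real^'t) measure)"
  define Y where "Y \<omega> = restrict (\<lambda>k. X k \<omega>) (-{i})" for \<omega>
  define T where "T = (Pi\<^sub>M {i} (\<lambda>_. borel) :: ('n \<Rightarrow> real^'t) measure)"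
  have ind1: "indep_var S Y T (\<lambda>\<omega>. restrict (\<lambda>k. X k \<omega>) {i})"
      unfolding S_def Y_def T_def using indep_var_restrict[OF assms(4), of "-{i}" "{i}"] by simp
  have ind2: "indep_var S Y T (\<lambda>\<omega>. restrict (\<lambda>k. (if k = i then Xt else X k) \<omega>) {i})"
  proof -
    have "indep_var S (\<lambda>\<omega>. restrict (\<lambda>k. (if k = i then Xt else X k) \<omega>) (-{i}))
        (Pi\<^sub>M {i} (\<lambda>_. borel)) (\<lambda>\<omega>. restrict (\<lambda>k. (if k = i then Xt else X k) \<omega>) {i})"
      unfolding S_def using indep_var_restrict[OF assms(5), of "-{i}" "{i}"] by simp
    moreover have "(\<lambda>\<omega>. restrict (\<lambda>k. (if k = i then Xt else X k) \<omega>) (-{i})) = Y"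
      unfolding Y_def by (auto simp: fun_eq_iff restrict_def)
    ultimately show ?thesis unfolding T_def by simp
  qed
  have fm: "f j \<in> borel_measurable borel" for j using F_USIA_measurable[OF assms(6)] .
  define H where "H z = (\<chi> j. f j (\<chi> k. if k = i then snd z $ j else fst z k $ j))" for z :: "('n \<Rightarrow> real^'t) \<times> (real^'t)"
  have Hm: "H \<in> borel_measurable (S \<Otimes>\<^sub>M borel)"
    unfolding H_def
  proof (intro vec_measurable)
    fix j
    have "(\<lambda>z::('n \<Rightarrow> real^'t) \<times> (real^'t). \<chi> k. if k = i then snd z $ j else fst z k $ j) \<in> borel_measurable (S \<Otimes>\<^sub>M borel)"
    proof (intro vec_measurable)
      fix k
      show "(\<lambda>z::('n \<Rightarrow> real^'t) \<times> (real^'t). if k = i then snd z $ j else fst z k $ j) \<in> borel_measurable (S \<Otimes>\<^sub>M borel)"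
      proof (cases "k = i")
        case True then show ?thesis by simp
      next
        case False
        have "(\<lambda>y::'n \<Rightarrow> real^'t. y k) \<in> borel_measurable S"
          unfolding S_def using False by (intro measurable_component_singleton) auto
        then show ?thesis using False by simp
      qed
    qed
    then show "(\<lambda>z. f j (\<chi> k. if k = i then snd z $ j else fst z k $ j)) \<in> borel_measurable (S \<Otimes>\<^sub>M borel)"
      using measurable_compose[OF _ fm] by blast
  qed
  have eqX: "(\<chi> j. f j (\<chi> k. X k \<omega> $ j)) = H (Y \<omega>, X i \<omega>)" for \<omega>
  proof -
    have "(\<chi> k. X k \<omega> $ j) = (\<chi> k. if k = i then X i \<omega> $ j else Y \<omega> k $ j)" for j
      unfolding Y_def by (simp add: vec_eq_iff)
    then show ?thesis unfolding H_def fst_conv snd_conv by simp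
  qed
  have eqXt: "(\<chi> j. f j (\<chi> k. if k = i then Xt \<omega> $ j else X k \<omega> $ j)) = H (Y \<omega>, Xt \<omega>)" for \<omega>
  proof -
    have "(\<chi> k. if k = i then Xt \<omega> $ j else X k \<omega> $ j) = (\<chi> k. if k = i then Xt \<omega> $ j else Y \<omega> k $ j)" for j
      unfolding Y_def by (simp add: vec_eq_iff)
    then show ?thesis unfolding H_def fst_conv snd_conv by simp
  qed
  have sec_dc: "dir_convex (\<lambda>v. \<phi> (H (y, v)))" if "dir_convex \<phi>" for \<phi> y
  proof -
    have "\<forall>j. \<exists>a b. a > 0 \<and> (\<forall>s. f j (upd_vec (\<chi> k. y k $ j) i s) = a * s + b)"
      using F_USIA_D[OF assms(6)] by blast
    then obtain a b where ab: "\<And>j. a j > 0" "\<And>j s. f j (upd_vec (\<chi> k. y k $ j) i s) = a j * s + b j"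
      by metis
    have "(\<lambda>v. \<phi> (H (y, v))) = (\<lambda>v. \<phi> (\<chi> j. a j * v$j + b j))"
    proof (rule ext, rule arg_cong[where f=\<phi>])
      fix v :: "real^'t"
      have "(\<chi> k. if k = i then v $ j else y k $ j) = upd_vec (\<chi> k. y k $ j) i (v$j)" for j
        by (simp add: upd_vec_def vec_eq_iff)
      then have eqj: "f j (\<chi> k. if k = i then v $ j else y k $ j) = a j * v$j + b j" for j
        using ab(2)[of j "v$j"] by metis
      show "H (y, v) = (\<chi> j. a j * v$j + b j)"
        unfolding H_def fst_conv snd_conv eqj ..
    qed
    then show ?thesis using dir_convex_affine[OF that ab(1)] by simp
  qed
  have dcx: "dcx_le M (\<lambda>\<omega>. \<chi> j. f j (\<chi> k. X k \<omega> $ j))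
                  (\<lambda>\<omega>. \<chi> j. f j (\<chi> k. if k = i then Xt \<omega> $ j else X k \<omega> $ j))"
    unfolding dcx_le_def
  proof (intro allI impI)
    fix \<phi> :: "real^'t \<Rightarrow> real"
    assume dc: "dir_convex \<phi>"
      and i1: "integrable M (\<lambda>\<omega>. \<phi> (\<chi> j. f j (\<chi> k. X k \<omega> $ j)))"
      and i2: "integrable M (\<lambda>\<omega>. \<phi> (\<chi> j. f j (\<chi> k. if k = i then Xt \<omega> $ j else X k \<omega> $ j)))"
    define G where "G z = \<phi> (H (fst z, snd z i))" for z :: "('n \<Rightarrow> real^'t) \<times> ('n \<Rightarrow> real^'t)"
    have "(\<lambda>z::('n \<Rightarrow> real^'t) \<times> ('n \<Rightarrow> real^'t). (fst z, snd z i)) \<in> measurable (S \<Otimes>\<^sub>M T) (S \<Otimes>\<^sub>M borel)"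
    proof (intro measurable_Pair)
      show "(\<lambda>z::('n \<Rightarrow> real^'t) \<times> ('n \<Rightarrow> real^'t). snd z i) \<in> borel_measurable (S \<Otimes>\<^sub>M T)"
        unfolding T_def by (intro measurable_compose[OF measurable_snd measurable_component_singleton]) auto
    qed simp
    then have Gm: "G \<in> borel_measurable (S \<Otimes>\<^sub>M T)"
      unfolding G_def using measurable_compose[OF _ measurable_compose[OF Hm dir_convex_measurable[OF dc]]] by blast
    have j1: "integrable M (\<lambda>\<omega>. G (Y \<omega>, restrict (\<lambda>k. X k \<omega>) {i}))" using i1 by (simp add: G_def eqX)
    have j2: "integrable M (\<lambda>\<omega>. G (Y \<omega>, restrict (\<lambda>k. (if k = i then Xt else X k) \<omega>) {i}))" using i2 by (simp add: G_def eqXt)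
    note T1 = transfer_fubini[OF assms(1) ind1 Gm j1]
    note T2 = transfer_fubini[OF assms(1) ind2 Gm j2]
    have "(\<integral>\<omega>. G (Y \<omega>, restrict (\<lambda>k. X k \<omega>) {i}) \<partial>M) \<le> (\<integral>\<omega>. G (Y \<omega>, restrict (\<lambda>k. (if k = i then Xt else X k) \<omega>) {i}) \<partial>M)"
      unfolding T1(3) T2(3)
    proof (rule integral_mono_AE[OF T1(2) T2(2)])
      show "AE y in distr M S Y. (\<integral>\<omega>. G (y, restrict (\<lambda>k. X k \<omega>) {i}) \<partial>M) \<le> (\<integral>\<omega>. G (y, restrict (\<lambda>k. (if k = i then Xt else X k) \<omega>) {i}) \<partial>M)"
        using T1(1) T2(1)
      proof eventually_elim
        case (elim y)
        have "(\<integral>\<omega>. \<phi> (H (y, X i \<omega>)) \<partial>M) \<le> (\<integral>\<omega>. \<phi> (H (y, Xt \<omega>)) \<partial>M)"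
          using assms(7)[unfolded dcx_le_def, rule_format, OF sec_dc[OF dc, of y]] elim by (simp add: G_def)
        then show ?case by (simp add: G_def)
      qed
    qed
    then show "(\<integral>\<omega>. \<phi> (\<chi> j. f j (\<chi> k. X k \<omega> $ j)) \<partial>M)
        \<le> (\<integral>\<omega>. \<phi> (\<chi> j. f j (\<chi> k. if k = i then Xt \<omega> $ j else X k \<omega> $ j)) \<partial>M)"
      by (simp add: G_def eqX eqXt)
  qed
  show ?thesis
  proof (intro conjI allI impI)
    show "dcx_le M (\<lambda>\<omega>. \<chi> j. f j (\<chi> k. X k \<omega> $ j))
                  (\<lambda>\<omega>. \<chi> j. f j (\<chi> k. if k = i then Xt \<omega> $ j else X k \<omega> $ j))" by (fact dcx)
    fix \<alpha> :: "'t \<Rightarrow> real" assume a: "\<forall>j. 0 \<le> \<alpha> j"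
    show "cx_le M (\<lambda>\<omega>. \<Sum>j\<in>UNIV. \<alpha> j * f j (\<chi> k. X k \<omega> $ j))
                    (\<lambda>\<omega>. \<Sum>j\<in>UNIV. \<alpha> j * f j (\<chi> k. if k = i then Xt \<omega> $ j else X k \<omega> $ j))"
      unfolding cx_le_def
    proof (intro allI impI)
      fix \<psi> :: "real \<Rightarrow> real" assume cv: "convex_on UNIV \<psi>"
      define \<Phi> where "\<Phi> x = \<psi> (\<Sum>j\<in>UNIV. \<alpha> j * x$j)" for x :: "real^'t"
      have dc: "dir_convex \<Phi>" unfolding \<Phi>_def using dir_convex_sum[OF cv] a by blast
      assume a1: "integrable M (\<lambda>\<omega>. \<psi> (\<Sum>j\<in>UNIV. \<alpha> j * f j (\<chi> k. X k \<omega> $ j)))"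
        and a2: "integrable M (\<lambda>\<omega>. \<psi> (\<Sum>j\<in>UNIV. \<alpha> j * f j (\<chi> k. if k = i then Xt \<omega> $ j else X k \<omega> $ j)))"
      have e1: "(\<lambda>\<omega>. \<Phi> (\<chi> j. f j (\<chi> k. X k \<omega> $ j))) = (\<lambda>\<omega>. \<psi> (\<Sum>j\<in>UNIV. \<alpha> j * f j (\<chi> k. X k \<omega> $ j)))"
        unfolding \<Phi>_def by simp
      have e2: "(\<lambda>\<omega>. \<Phi> (\<chi> j. f j (\<chi> k. if k = i then Xt \<omega> $ j else X k \<omega> $ j))) =
          (\<lambda>\<omega>. \<psi> (\<Sum>j\<in>UNIV. \<alpha> j * f j (\<chi> k. if k = i then Xt \<omega> $ j else X k \<omega> $ j)))"
        unfolding \<Phi>_def by simp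
      have "(\<integral>\<omega>. \<Phi> (\<chi> j. f j (\<chi> k. X k \<omega> $ j)) \<partial>M)
         \<le> (\<integral>\<omega>. \<Phi> (\<chi> j. f j (\<chi> k. if k = i then Xt \<omega> $ j else X k \<omega> $ j)) \<partial>M)"
        using dcx[unfolded dcx_le_def, rule_format, OF dc] a1 a2 unfolding e1 e2 by blast
      then show "(\<integral>\<omega>. \<psi> (\<Sum>j\<in>UNIV. \<alpha> j * f j (\<chi> k. X k \<omega> $ j)) \<partial>M)
         \<le> (\<integral>\<omega>. \<psi> (\<Sum>j\<in>UNIV. \<alpha> j * f j (\<chi> k. if k = i then Xt \<omega> $ j else X k \<omega> $ j)) \<partial>M)"
        unfolding e1 e2 .
    qed
  qed
qed

end
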